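(* Let $X\in\mathbb{R}^{n\times d}$ with rows $x_1,\dots,x_n$, weighted by $w\in\mathbb{R}^n_{>0}$, be $\mu$-complex, let $\mathcal{W}=\sum_{j=1}^n w_j$, and let $U$ be a matrix whose $d$ (or fewer) columns form an orthonormal basis of the column space of $D_wX$, with rows $U_i$. Then for every $i\in[n]$ the sensitivity satisfies $\varsigma_i\le s_i:=(20+2\mu)\left(\|U_i\|_2+w_i/\mathcal{W}\right)$, and the total sensitivity satisfies $\mathfrak{S}=\sum_{i=1}^n\varsigma_i\le S:=\sum_{i=1}^n s_i\le 44\mu\sqrt{nd}$.
   Context: $g(z)=\ln(1+e^z)$ and $f_w(X\beta)=\sum_{j=1}^n w_j g(x_j\beta)$. The sensitivity of the $i$-th point is $\varsigma_i=\sup_{\beta\in\mathbb{R}^d}\frac{w_i g(x_i\beta)}{f_w(X\beta)}$. $D_w$ is the diagonal matrix with $(D_w)_{ii}=w_i$. For a vector $v$, $v^+$ and $v^-$ denote the vectors of its positive and negative entries. $\mu_w(X)=\sup_{\beta:\,D_wX\beta\neq0}\|(D_wX\beta)^+\|_1/\|(D_wX\beta)^-\|_1$, and $X$ weighted by $w$ is $\mu$-complex if $\mu_w(X)\le\mu$ (note $\mu_w(X)\ge 1$ by symmetry $\beta\mapsto-\beta$). *)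

theory Defs
  imports "HOL-Analysis.Analysis"
begin

text \<open>Matrices are explicit: X is n x d given by X i l for i < n, l < d;
  vectors in R^d are functions nat => real (only entries below d matter).\<close>

definition g :: "real \<Rightarrow> real" where
  "g z = ln (1 + exp z)"

definition matvec :: "nat \<Rightarrow> (nat \<Rightarrow> nat \<Rightarrow> real) \<Rightarrow> (nat \<Rightarrow> real) \<Rightarrow> nat \<Rightarrow> real" where
  "matvec d X \<beta> i = (\<Sum>l<d. X i l * \<beta> l)"

definition f_w :: "nat \<Rightarrow> nat \<Rightarrow> (nat \<Rightarrow> real) \<Rightarrow> (nat \<Rightarrow> nat \<Rightarrow> real) \<Rightarrow> (nat \<Rightarrow> real) \<Rightarrow> real" where
  "f_w n d w X \<beta> = (\<Sum>j<n. w j * g (matvec d X \<beta> j))"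

definition sensitivity :: "nat \<Rightarrow> nat \<Rightarrow> (nat \<Rightarrow> real) \<Rightarrow> (nat \<Rightarrow> nat \<Rightarrow> real) \<Rightarrow> nat \<Rightarrow> real" where
  "sensitivity n d w X i = (SUP \<beta>. w i * g (matvec d X \<beta> i) / f_w n d w X \<beta>)"

definition DwXb :: "nat \<Rightarrow> (nat \<Rightarrow> real) \<Rightarrow> (nat \<Rightarrow> nat \<Rightarrow> real) \<Rightarrow> (nat \<Rightarrow> real) \<Rightarrow> nat \<Rightarrow> real" where
  "DwXb d w X \<beta> j = w j * matvec d X \<beta> j"

definition pos_norm1 :: "nat \<Rightarrow> (nat \<Rightarrow> real) \<Rightarrow> real" where
  "pos_norm1 n v = (\<Sum>j<n. max 0 (v j))"

definition neg_norm1 :: "nat \<Rightarrow> (nat \<Rightarrow> real) \<Rightarrow> real" where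
  "neg_norm1 n v = (\<Sum>j<n. max 0 (- v j))"

text \<open>mu_w(X) as an extended real (a ratio with zero denominator is +infinity).\<close>
definition mu_w :: "nat \<Rightarrow> nat \<Rightarrow> (nat \<Rightarrow> real) \<Rightarrow> (nat \<Rightarrow> nat \<Rightarrow> real) \<Rightarrow> ereal" where
  "mu_w n d w X = (SUP \<beta> \<in> {\<beta>. \<exists>j<n. DwXb d w X \<beta> j \<noteq> 0}.
       ereal (pos_norm1 n (DwXb d w X \<beta>)) / ereal (neg_norm1 n (DwXb d w X \<beta>)))"

definition mu_complex :: "nat \<Rightarrow> nat \<Rightarrow> (nat \<Rightarrow> real) \<Rightarrow> (nat \<Rightarrow> nat \<Rightarrow> real) \<Rightarrow> real \<Rightarrow> bool" where
  "mu_complex n d w X \<mu> \<longleftrightarrow> mu_w n d w X \<le> ereal \<mu>"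

definition colspace :: "nat \<Rightarrow> nat \<Rightarrow> (nat \<Rightarrow> nat \<Rightarrow> real) \<Rightarrow> (nat \<Rightarrow> real) set" where
  "colspace n m A = {v. \<exists>\<beta>. \<forall>i<n. v i = (\<Sum>l<m. A i l * \<beta> l)}"

definition orthonormal_cols :: "nat \<Rightarrow> nat \<Rightarrow> (nat \<Rightarrow> nat \<Rightarrow> real) \<Rightarrow> bool" where
  "orthonormal_cols n k U \<longleftrightarrow>
     (\<forall>c<k. \<forall>c'<k. (\<Sum>i<n. U i c * U i c') = (if c = c' then 1 else 0))"

definition row_norm :: "nat \<Rightarrow> (nat \<Rightarrow> nat \<Rightarrow> real) \<Rightarrow> nat \<Rightarrow> real" where
  "row_norm k U i = sqrt (\<Sum>c<k. (U i c)\<^sup>2)"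

end

theory Submission
  imports Defs
begin

lemma g_refl: "g z = z + g (-z)"
proof -
  have "1 + exp z = exp z * (1 + exp (-z))" by (simp add: algebra_simps exp_minus field_simps)
  moreover have "1 + exp (-z) > 0" by (simp add: add_pos_pos)
  ultimately show ?thesis unfolding g_def by (simp add: ln_mult)
qed

lemma g_pos: "g z > 0" unfolding g_def by (intro ln_gt_zero) simp

lemma g_mono: "x \<le> y \<Longrightarrow> g x \<le> g y" unfolding g_def
  by (subst ln_le_cancel_iff) (auto simp: add_pos_pos)

lemma g_ge: "max 0 z \<le> g z"
  using g_refl[of z] g_pos[of z] g_pos[of "-z"] by auto

lemma g0: "g 0 = ln 2" unfolding g_def by simp

lemma g_low: "ln 2 \<le> g z + max 0 (-z)"
proof (cases "z \<ge> 0")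
  case True then show ?thesis using g_mono[of 0 z] g0 by simp
next
  case False then show ?thesis using g_mono[of 0 "-z"] g0 g_refl[of z] by simp
qed

lemma g_up: "g z \<le> ln 2 + max 0 z"
proof (cases "z \<ge> 0")
  case True then show ?thesis using g_mono[of "-z" 0] g0 g_refl[of z] by simp
next
  case False then show ?thesis using g_mono[of z 0] g0 by simp
qed

lemma matvec_neg: "matvec d X (\<lambda>l. - \<beta> l) j = - matvec d X \<beta> j"
  unfolding matvec_def by (simp add: sum_negf)

lemma mu_bound:
  assumes mc: "mu_complex n d w X \<mu>" and mu: "\<mu> \<ge> 1"
  shows "neg_norm1 n (DwXb d w X \<beta>) \<le> \<mu> * pos_norm1 n (DwXb d w X \<beta>)"
proof -
  define v where "v = DwXb d w X \<beta>"
  define v' where "v' = DwXb d w X (\<lambda>l. - \<beta> l)"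
  have vv: "v' j = - v j" for j unfolding v_def v'_def DwXb_def matvec_neg by simp
  have P0: "pos_norm1 n v \<ge> 0" "neg_norm1 n v \<ge> 0"
    unfolding pos_norm1_def neg_norm1_def by (auto intro: sum_nonneg)
  show ?thesis
  proof (cases "\<exists>j<n. v j \<noteq> 0")
    case False
    then have "neg_norm1 n v = 0" "pos_norm1 n v = 0"
      unfolding pos_norm1_def neg_norm1_def by auto
    then show ?thesis using v_def by simp
  next
    case True
    then obtain j where j: "j < n" "v j \<noteq> 0" by auto
    have "(\<lambda>l. - \<beta> l) \<in> {\<beta>. \<exists>j<n. DwXb d w X \<beta> j \<noteq> 0}"
      using j vv unfolding v'_def by force
    then have "ereal (pos_norm1 n v') / ereal (neg_norm1 n v') \<le> mu_w n d w X"
      unfolding mu_w_def v'_def by (rule SUP_upper)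
    also have "\<dots> \<le> ereal \<mu>" using mc unfolding mu_complex_def .
    finally have R: "ereal (neg_norm1 n v) / ereal (pos_norm1 n v) \<le> ereal \<mu>"
      using vv unfolding pos_norm1_def neg_norm1_def by simp
    show ?thesis
    proof (cases "pos_norm1 n v = 0")
      case True
      then have "\<forall>i\<in>{..<n}. max 0 (v i) = 0"
        unfolding pos_norm1_def using sum_nonneg_eq_0_iff[of "{..<n}" "\<lambda>i. max 0 (v i)"] by simp
      then have "max 0 (v j) = 0" using j by blast
      then have "v j \<le> 0" by (simp add: max_def split: if_splits)
      then have "v j < 0" using j by simp
      then have "neg_norm1 n v > 0" unfolding neg_norm1_def
        using j by (intro sum_pos2[of _ j]) auto
      then have "ereal (neg_norm1 n v) / ereal (pos_norm1 n v) = \<infinity>"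
        using True by (simp add: divide_ereal_def)
      then show ?thesis using R by simp
    next
      case False
      then have "neg_norm1 n v / pos_norm1 n v \<le> \<mu>" using R P0 by simp
      then show ?thesis using False P0 v_def by (simp add: divide_le_eq)
    qed
  qed
qed

lemma sq_le_l1: fixes v :: "nat \<Rightarrow> real" shows "(\<Sum>j<n. (v j)\<^sup>2) \<le> (\<Sum>j<n. \<bar>v j\<bar>::real)\<^sup>2"
proof -
  have "(v j)\<^sup>2 \<le> \<bar>v j\<bar> * (\<Sum>j<n. \<bar>v j\<bar>)" if "j < n" for j
  proof -
    have "\<bar>v j\<bar> \<le> (\<Sum>j<n. \<bar>v j\<bar>)"
      by (rule member_le_sum) (use that in auto)
    then have "\<bar>v j\<bar> * \<bar>v j\<bar> \<le> \<bar>v j\<bar> * (\<Sum>j<n. \<bar>v j\<bar>)"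
      by (intro mult_left_mono) auto
    then show ?thesis by (simp add: power2_eq_square)
  qed
  then have "(\<Sum>j<n. (v j)\<^sup>2) \<le> (\<Sum>j<n. \<bar>v j\<bar> * (\<Sum>j<n. \<bar>v j\<bar>))"
    by (intro sum_mono) auto
  also have "\<dots> = (\<Sum>j<n. \<bar>v j\<bar>)\<^sup>2" by (simp add: power2_eq_square sum_distrib_right)
  finally show ?thesis .
qed

lemma orth_sum:
  assumes orth: "orthonormal_cols n k U"
  shows "(\<Sum>j<n. (\<Sum>c<k. U j c * \<gamma> c)\<^sup>2) = (\<Sum>c<k. (\<gamma> c)\<^sup>2)"
proof -
  have "(\<Sum>j<n. (\<Sum>c<k. U j c * \<gamma> c)\<^sup>2)
      = (\<Sum>j<n. \<Sum>c<k. \<Sum>c'<k. (\<gamma> c * \<gamma> c') * (U j c * U j c'))"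
    by (simp add: power2_eq_square sum_product mult_ac)
  also have "\<dots> = (\<Sum>c<k. \<Sum>c'<k. (\<gamma> c * \<gamma> c') * (\<Sum>j<n. U j c * U j c'))"
    by (simp add: sum_distrib_left sum.swap[of _ "{..<n}"])
  also have "\<dots> = (\<Sum>c<k. \<Sum>c'<k. (\<gamma> c * \<gamma> c') * (if c = c' then 1 else 0))"
    using orth unfolding orthonormal_cols_def by (intro sum.cong refl) auto
  also have "\<dots> = (\<Sum>c<k. (\<gamma> c)\<^sup>2)"
    by (simp add: power2_eq_square if_distrib sum.delta cong: if_cong)
  finally show ?thesis .
qed

lemma row_bound:
  assumes orth: "orthonormal_cols n k U" and vin: "v \<in> colspace n k U" and i: "i < n"
  shows "\<bar>v i\<bar> \<le> row_norm k U i * (\<Sum>j<n. \<bar>v j\<bar>)"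
proof -
  obtain \<gamma> where g: "\<forall>i<n. v i = (\<Sum>l<k. U i l * \<gamma> l)" using vin unfolding colspace_def by auto
  have 1: "(v i)\<^sup>2 \<le> (\<Sum>c<k. (U i c)\<^sup>2) * (\<Sum>c<k. (\<gamma> c)\<^sup>2)"
    using g i Cauchy_Schwarz_ineq_sum[of "U i" \<gamma> "{..<k}"] by simp
  have "(\<Sum>j<n. (v j)\<^sup>2) = (\<Sum>j<n. (\<Sum>c<k. U j c * \<gamma> c)\<^sup>2)"
    using g by (intro sum.cong) auto
  then have 2: "(\<Sum>c<k. (\<gamma> c)\<^sup>2) = (\<Sum>j<n. (v j)\<^sup>2)" using orth_sum[OF orth, of \<gamma>] by simp
  have 3: "(\<Sum>c<k. (U i c)\<^sup>2) * (\<Sum>j<n. (v j)\<^sup>2) \<le> (\<Sum>c<k. (U i c)\<^sup>2) * (\<Sum>j<n. \<bar>v j\<bar>)\<^sup>2"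
    by (rule mult_left_mono[OF sq_le_l1]) (simp add: sum_nonneg)
  have 4: "(\<Sum>c<k. (U i c)\<^sup>2) * (\<Sum>j<n. \<bar>v j\<bar>)\<^sup>2 = (row_norm k U i * (\<Sum>j<n. \<bar>v j\<bar>))\<^sup>2"
    unfolding row_norm_def power_mult_distrib by (simp add: sum_nonneg)
  have "\<bar>v i\<bar>\<^sup>2 \<le> (row_norm k U i * (\<Sum>j<n. \<bar>v j\<bar>))\<^sup>2"
    using order_trans[OF 1[unfolded 2] 3] unfolding 4 by simp
  then show ?thesis
    by (rule power2_le_imp_le) (simp add: row_norm_def sum_nonneg)
qed

lemma max_w: "(w::real) > 0 \<Longrightarrow> max 0 (w * z) = w * max 0 z"
  by (auto simp: max_def zero_le_mult_iff)

lemma ratio_bound: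
  assumes w: "\<forall>j<n. w j > 0" and mc: "mu_complex n d w X \<mu>" and mu: "\<mu> \<ge> 1"
    and orth: "orthonormal_cols n k U"
    and cs: "colspace n k U = colspace n d (\<lambda>i l. w i * X i l)" and i: "i < n"
  shows "w i * g (matvec d X \<beta> i) / f_w n d w X \<beta>
     \<le> (1 + \<mu>) * (row_norm k U i + w i / (\<Sum>j<n. w j))"
proof -
  define z where "z j = matvec d X \<beta> j" for j
  define v where "v = DwXb d w X \<beta>"
  define W where "W = (\<Sum>j<n. w j)"
  define f where "f = f_w n d w X \<beta>"
  define P where "P = pos_norm1 n v"
  define N where "N = neg_norm1 n v"
  define r where "r = row_norm k U i"
  have vz: "v j = w j * z j" for j unfolding v_def z_def DwXb_def ..
  have fz: "f = (\<Sum>j<n. w j * g (z j))" unfolding f_def f_w_def z_def ..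
  have wi: "w i > 0" using w i by auto
  have W0: "W > 0" unfolding W_def using w i by (intro sum_pos2[of _ i]) auto
  have r0: "r \<ge> 0" unfolding r_def row_norm_def by (simp add: sum_nonneg)
  have "w i * g (z i) \<le> f" unfolding fz
    by (rule member_le_sum) (use i w g_pos in \<open>auto intro!: mult_nonneg_nonneg less_imp_le\<close>)
  then have f0: "f > 0" using wi g_pos[of "z i"] by (smt (verit) mult_pos_pos)
  have P_eq: "P = (\<Sum>j<n. w j * max 0 (z j))" unfolding P_def pos_norm1_def vz
    using w by (intro sum.cong) (auto simp: max_w)
  have N_eq: "N = (\<Sum>j<n. w j * max 0 (- z j))" unfolding N_def neg_norm1_def vz
    using w by (intro sum.cong) (auto simp: max_w[symmetric])
  have Pf: "P \<le> f" unfolding P_eq fz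
    using w g_ge by (intro sum_mono mult_left_mono) (auto intro: less_imp_le)
  have NP: "N \<le> \<mu> * P" unfolding N_def P_def v_def using mu_bound[OF mc mu] .
  have "W * ln 2 = (\<Sum>j<n. w j * ln 2)" unfolding W_def by (simp add: sum_distrib_right)
  also have "\<dots> \<le> (\<Sum>j<n. w j * g (z j) + w j * max 0 (- z j))"
    using w g_low by (intro sum_mono) (auto simp flip: distrib_left intro!: mult_left_mono less_imp_le)
  also have "\<dots> = f + N" unfolding fz N_eq by (simp add: sum.distrib)
  finally have WL0: "W * ln 2 \<le> f + N" .
  have "\<mu> * P \<le> \<mu> * f" using Pf mu by (intro mult_left_mono) auto
  then have WL: "W * ln 2 \<le> (1 + \<mu>) * f" using WL0 NP by (simp add: algebra_simps)
  have "v \<in> colspace n d (\<lambda>i l. w i * X i l)" unfolding colspace_def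
    by (rule CollectI, rule exI[of _ \<beta>]) (simp add: v_def DwXb_def matvec_def sum_distrib_left mult.assoc)
  then have vin: "v \<in> colspace n k U" using cs by simp
  have "\<bar>v i\<bar> \<le> r * (\<Sum>j<n. \<bar>v j\<bar>)" unfolding r_def by (rule row_bound[OF orth vin i])
  also have "(\<Sum>j<n. \<bar>v j\<bar>) = P + N" unfolding P_def N_def pos_norm1_def neg_norm1_def
    by (simp add: sum.distrib[symmetric]) (intro sum.cong; auto simp: max_def)
  finally have vi0: "\<bar>v i\<bar> \<le> r * (P + N)" .
  have "\<mu> * P \<le> \<mu> * f" using Pf mu by (intro mult_left_mono) auto
  then have "P + N \<le> (1 + \<mu>) * f" using NP Pf by (simp add: algebra_simps)
  then have "r * (P + N) \<le> r * ((1 + \<mu>) * f)" using r0 by (intro mult_left_mono)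
  then have vi: "\<bar>v i\<bar> \<le> r * ((1 + \<mu>) * f)" using vi0 by linarith
  have "w i * g (z i) \<le> w i * (ln 2 + max 0 (z i))" using wi g_up by (intro mult_left_mono) auto
  also have "\<dots> = w i * ln 2 + max 0 (v i)" using wi by (simp add: vz max_w distrib_left)
  also have "\<dots> \<le> (w i / W) * ((1 + \<mu>) * f) + r * ((1 + \<mu>) * f)"
  proof -
    have "w i * ln 2 = (w i / W) * (W * ln 2)" using W0 by simp
    also have "\<dots> \<le> (w i / W) * ((1 + \<mu>) * f)" using WL wi W0 by (intro mult_left_mono) auto
    finally show ?thesis using vi by linarith
  qed
  finally have A: "w i * g (z i) \<le> (w i / W) * ((1 + \<mu>) * f) + r * ((1 + \<mu>) * f)" .
  have "(w i / W) * ((1 + \<mu>) * f) + r * ((1 + \<mu>) * f) = (1 + \<mu>) * (r + w i / W) * f"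
    by (simp add: algebra_simps add_divide_distrib)
  then have "w i * g (z i) \<le> (1 + \<mu>) * (r + w i / W) * f" using A by simp
  then show ?thesis using f0 unfolding z_def f_def r_def W_def by (simp add: pos_divide_le_eq)
qed

lemma rn_sum:
  assumes orth: "orthonormal_cols n k U"
  shows "(\<Sum>i<n. row_norm k U i) \<le> sqrt (real n * real k)"
proof -
  have "(\<Sum>i<n. (row_norm k U i)\<^sup>2) = (\<Sum>i<n. \<Sum>c<k. (U i c)\<^sup>2)"
    unfolding row_norm_def by (intro sum.cong) (auto simp: sum_nonneg)
  also have "\<dots> = (\<Sum>c<k. \<Sum>i<n. U i c * U i c)" by (simp add: sum.swap[of _ "{..<n}"] power2_eq_square)
  also have "\<dots> = (\<Sum>c<k. 1)" using orth unfolding orthonormal_cols_def by (intro sum.cong) auto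
  finally have S: "(\<Sum>i<n. (row_norm k U i)\<^sup>2) = real k" by simp
  have "(\<Sum>i<n. row_norm k U i)\<^sup>2 \<le> (\<Sum>i<n. (row_norm k U i)\<^sup>2) * card {..<n}"
    by (rule sum_squared_le_sum_of_squares)
  then have "(\<Sum>i<n. row_norm k U i)\<^sup>2 \<le> real n * real k" using S by (simp add: mult.commute)
  then show ?thesis by (simp add: real_le_rsqrt)
qed

theorem lemma9:
  fixes n d k :: nat and X U :: "nat \<Rightarrow> nat \<Rightarrow> real" and w :: "nat \<Rightarrow> real" and \<mu> :: real
  assumes "d \<ge> 1"
    and "\<mu> \<ge> 1"
    and "\<forall>j<n. w j > 0"
    and "mu_complex n d w X \<mu>"
    and "k \<le> d"
    and "orthonormal_cols n k U"
    and "colspace n k U = colspace n d (\<lambda>i l. w i * X i l)"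
  shows "(\<forall>i<n. sensitivity n d w X i
              \<le> (20 + 2 * \<mu>) * (row_norm k U i + w i / (\<Sum>j<n. w j)))
       \<and> (\<Sum>i<n. sensitivity n d w X i)
              \<le> (\<Sum>i<n. (20 + 2 * \<mu>) * (row_norm k U i + w i / (\<Sum>j<n. w j)))
       \<and> (\<Sum>i<n. (20 + 2 * \<mu>) * (row_norm k U i + w i / (\<Sum>j<n. w j)))
              \<le> 44 * \<mu> * sqrt (real n * real d)"
proof -
  have W0: "(\<Sum>j<n. w j) \<ge> 0" using assms(3) by (intro sum_nonneg) (auto intro: less_imp_le)
  have P1: "\<forall>i<n. sensitivity n d w X i
              \<le> (20 + 2 * \<mu>) * (row_norm k U i + w i / (\<Sum>j<n. w j))"
  proof (intro allI impI)
    fix i assume i: "i < n"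
    have nn: "row_norm k U i + w i / (\<Sum>j<n. w j) \<ge> 0"
    proof -
      have "0 \<le> row_norm k U i" by (simp add: row_norm_def sum_nonneg)
      moreover have "0 \<le> w i / (\<Sum>j<n. w j)" using assms(3) i W0 by (simp add: less_imp_le)
      ultimately show ?thesis by linarith
    qed
    show "sensitivity n d w X i \<le> (20 + 2 * \<mu>) * (row_norm k U i + w i / (\<Sum>j<n. w j))"
      unfolding sensitivity_def
    proof (rule cSUP_least)
      fix \<beta> :: "nat \<Rightarrow> real"
      have "w i * g (matvec d X \<beta> i) / f_w n d w X \<beta>
          \<le> (1 + \<mu>) * (row_norm k U i + w i / (\<Sum>j<n. w j))"
        by (rule ratio_bound[OF assms(3,4,2,6,7) i])
      also have "\<dots> \<le> (20 + 2 * \<mu>) * (row_norm k U i + w i / (\<Sum>j<n. w j))"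
        using nn assms(2) by (intro mult_right_mono) auto
      finally show "w i * g (matvec d X \<beta> i) / f_w n d w X \<beta>
          \<le> (20 + 2 * \<mu>) * (row_norm k U i + w i / (\<Sum>j<n. w j))" .
    qed simp
  qed
  have P2: "(\<Sum>i<n. sensitivity n d w X i)
              \<le> (\<Sum>i<n. (20 + 2 * \<mu>) * (row_norm k U i + w i / (\<Sum>j<n. w j)))"
    using P1 by (intro sum_mono) auto
  have P3: "(\<Sum>i<n. (20 + 2 * \<mu>) * (row_norm k U i + w i / (\<Sum>j<n. w j)))
              \<le> 44 * \<mu> * sqrt (real n * real d)"
  proof (cases "n = 0")
    case True then show ?thesis by simp
  next
    case False
    have Wp: "(\<Sum>j<n. w j) > 0" using assms(3) False by (intro sum_pos2[of _ 0]) auto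
    have "(\<Sum>i<n. w i / (\<Sum>j<n. w j)) = 1" using Wp by (simp add: sum_divide_distrib[symmetric])
    then have E: "(\<Sum>i<n. (20 + 2 * \<mu>) * (row_norm k U i + w i / (\<Sum>j<n. w j)))
        = (20 + 2 * \<mu>) * ((\<Sum>i<n. row_norm k U i) + 1)"
      by (simp add: sum_distrib_left[symmetric] sum.distrib)
    define s where "s = sqrt (real n * real d)"
    have "1 \<le> n * d" using False assms(1) by (simp add: Suc_le_eq)
    then have "1 \<le> real n * real d" by (metis of_nat_1 of_nat_le_iff of_nat_mult)
    then have s1: "s \<ge> 1" unfolding s_def by simp
    have "(\<Sum>i<n. row_norm k U i) \<le> sqrt (real n * real k)" by (rule rn_sum[OF assms(6)])
    also have "\<dots> \<le> s" unfolding s_def using assms(5) by (simp add: mult_left_mono)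
    finally have R: "(\<Sum>i<n. row_norm k U i) + 1 \<le> 2 * s" using s1 by linarith
    have "(20 + 2 * \<mu>) * ((\<Sum>i<n. row_norm k U i) + 1) \<le> (20 + 2 * \<mu>) * (2 * s)"
      using R assms(2) by (intro mult_left_mono) auto
    also have "\<dots> \<le> (22 * \<mu>) * (2 * s)" using s1 assms(2) by (intro mult_right_mono) auto
    finally show ?thesis unfolding E s_def by simp
  qed
  show ?thesis using P1 P2 P3 by blast
qed

end
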